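(* Let $h>0$, $\mathbb{T}:=\{0,h,2h,\ldots\}$, $n\in\mathbb{N}$, and $p_0,\ldots,p_{n-1}\in\mathbb{C}\setminus\{-\tfrac1h\}$; define $p:\mathbb{T}\to\mathbb{C}$ by $p(t)=p_k$ if $\tfrac th\equiv k\pmod n$, where $p$ is periodic with period $n$ and not periodic with any smaller period. Let $E:=\prod_{i=0}^{n-1}|1+hp_i|$ and assume $0<E\ne1$. For $k\in\{0,\ldots,n-1\}$ let $S_k:=\sum_{j=1}^{n}\left(\prod_{i=0}^{j-1}|1+hp_{(k+i)\bmod n}|\right)^{-1}$. Then the equation $\Delta_hx(t)-p(t)x(t)=0$, $t\in\mathbb{T}$, with $\Delta_hx(t):=\frac{x(t+h)-x(t)}{h}$, has Ulam stability on $\mathbb{T}$ with Ulam stability constant $$K_0:=\frac{hE}{|1-E|}\max\{S_0,S_1,\ldots,S_{n-1}\}.$$ Moreover, if $E>1$, then $K_0$ is the minimum Ulam stability constant for this equation.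
   Context: A constant $K>0$ is an Ulam stability constant for the equation on $\mathbb{T}$ if for every $\varepsilon>0$ and every $\phi:\mathbb{T}\to\mathbb{C}$ with $|\Delta_h\phi(t)-p(t)\phi(t)|\le\varepsilon$ for all $t\in\mathbb{T}$, there is a solution $x$ with $|\phi(t)-x(t)|\le K\varepsilon$ for all $t\in\mathbb{T}$; the equation has Ulam stability if such $K$ exists. "Minimum" means no positive number smaller than $K_0$ is an Ulam stability constant. Note $E=|e_p(nh)|$ where $e_p(t)=\prod_{j=0}^{t/h-1}(1+hp(jh))$. *)

theory Defs
  imports Complex_Main
begin

definition Tset :: "real \<Rightarrow> real set" where
  "Tset h = {real k * h | k. True}"

definition Delta_h :: "real \<Rightarrow> (real \<Rightarrow> complex) \<Rightarrow> real \<Rightarrow> complex" where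
  "Delta_h h x t = (x (t + h) - x t) / complex_of_real h"

definition pfun :: "real \<Rightarrow> nat \<Rightarrow> (nat \<Rightarrow> complex) \<Rightarrow> real \<Rightarrow> complex" where
  "pfun h n pk t = pk (nat \<lfloor>t / h\<rfloor> mod n)"

definition ulam_constant :: "real \<Rightarrow> (real \<Rightarrow> complex) \<Rightarrow> real \<Rightarrow> bool" where
  "ulam_constant h p K \<longleftrightarrow> K > 0 \<and>
     (\<forall>\<epsilon>>0. \<forall>\<phi> :: real \<Rightarrow> complex.
        (\<forall>t\<in>Tset h. cmod (Delta_h h \<phi> t - p t * \<phi> t) \<le> \<epsilon>) \<longrightarrow>
        (\<exists>x :: real \<Rightarrow> complex. (\<forall>t\<in>Tset h. Delta_h h x t - p t * x t = 0) \<and>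
             (\<forall>t\<in>Tset h. cmod (\<phi> t - x t) \<le> K * \<epsilon>)))"

definition ulam_stable :: "real \<Rightarrow> (real \<Rightarrow> complex) \<Rightarrow> bool" where
  "ulam_stable h p \<longleftrightarrow> (\<exists>K. ulam_constant h p K)"

definition ulam_min_constant :: "real \<Rightarrow> (real \<Rightarrow> complex) \<Rightarrow> real \<Rightarrow> bool" where
  "ulam_min_constant h p K0 \<longleftrightarrow> ulam_constant h p K0 \<and>
     (\<forall>K. 0 < K \<and> K < K0 \<longrightarrow> \<not> ulam_constant h p K)"

end

theory Submission
  imports Defs
begin

locale ul = fixes h :: real and n :: nat and pk :: "nat \<Rightarrow> complex"
  assumes hpos: "h > 0" and npos: "n \<ge> 1"
    and pk_ne: "\<forall>i<n. pk i \<noteq> - (1 / complex_of_real h)"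
begin

definition a :: "nat \<Rightarrow> complex" where "a i = 1 + complex_of_real h * pk (i mod n)"
definition b :: "nat \<Rightarrow> real" where "b i = cmod (a i)"
definition e :: "nat \<Rightarrow> complex" where "e m = (\<Prod>i<m. a i)"
definition E :: real where "E = (\<Prod>i<n. cmod (1 + complex_of_real h * pk i))"
definition S :: "nat \<Rightarrow> real" where
  "S k = (\<Sum>j=1..n. inverse (\<Prod>i<j. cmod (1 + complex_of_real h * pk ((k + i) mod n))))"
definition M :: real where "M = Max (S ` {..<n})"
definition P :: "nat \<Rightarrow> nat \<Rightarrow> real" where "P m L = (\<Prod>i<L. b (m+i))"

lemma a_nz: "a i \<noteq> 0"
proof
  assume h0: "a i = 0"
  have "i mod n < n" using npos by auto
  hence ne: "pk (i mod n) \<noteq> - (1 / complex_of_real h)" using pk_ne by blast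
  have "complex_of_real h \<noteq> 0" using hpos by simp
  from h0 have "pk (i mod n) = - (1 / complex_of_real h)"
    unfolding a_def using \<open>complex_of_real h \<noteq> 0\<close>
    by (simp add: field_simps add_eq_0_iff)
  with ne show False by simp
qed

lemma b_pos: "b i > 0" using a_nz by (simp add: b_def)

lemma P_pos: "P m L > 0" unfolding P_def using b_pos by (simp add: prod_pos)

lemma P_0[simp]: "P m 0 = 1" by (simp add: P_def)

lemma P_Suc_shift: "P m (Suc L) = b m * P (Suc m) L"
  unfolding P_def by (subst prod.lessThan_Suc_shift) simp

lemma P_Suc: "P m (Suc L) = P m L * b (m + L)"
  unfolding P_def by simp

lemma P_add: "P m (L1 + L2) = P m L1 * P (m + L1) L2"
  by (induction L2) (simp_all add: P_Suc add.assoc)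

lemma b_mod: "b (i + n) = b i"
  unfolding b_def a_def by simp

lemma P_rot: "P k n = E"
proof (induction k)
  case 0
  have "P 0 n = (\<Prod>i<n. cmod (1 + complex_of_real h * pk i))"
    unfolding P_def b_def a_def by (rule prod.cong) auto
  then show ?case by (simp add: E_def)
next
  case (Suc k)
  have "b k * P (Suc k) n = P k (Suc n)" by (simp add: P_Suc_shift)
  also have "\<dots> = P k n * b k" by (simp add: P_Suc b_mod add.commute)
  finally show ?case using Suc b_pos[of k] by simp
qed

lemma E_pos: "E > 0" using P_rot[of 0] P_pos[of 0 n] by simp

lemma P_period: "P m (r * n) = E ^ r"
proof (induction r)
  case (Suc r)
  have "P m (Suc r * n) = P m (r * n + n)" by (simp add: add.commute)
  also have "\<dots> = E ^ r * E" by (simp only: P_add Suc P_rot)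
  finally show ?case by simp
qed simp

lemma S_alt: "S k = (\<Sum>l<n. inverse (P k (Suc l)))"
  unfolding S_def P_def b_def a_def
  by (subst sum.atLeast1_atMost_eq[symmetric]) simp

lemma S_rec: "S (Suc k) = b k * S k + 1 / E - 1"
proof -
  have "b k * S k = (\<Sum>l<n. inverse (P (Suc k) l))"
    unfolding S_alt sum_distrib_left P_Suc_shift using b_pos[of k]
    by (intro sum.cong) (auto simp: field_simps)
  also have "\<dots> = (\<Sum>l<Suc n. inverse (P (Suc k) l)) - inverse E"
    by (simp add: P_rot)
  also have "(\<Sum>l<Suc n. inverse (P (Suc k) l)) = 1 + S (Suc k)"
    by (subst sum.lessThan_Suc_shift) (simp add: S_alt)
  finally show ?thesis by (simp add: field_simps)
qed

lemma b_mod': "b (i mod n + j) = b (i + j)"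
  unfolding b_def a_def by (simp add: mod_add_left_eq)

lemma S_mod: "S k = S (k mod n)"
  unfolding S_alt P_def by (simp add: b_mod')

lemma S_pos: "S k > 0"
  unfolding S_alt using npos P_pos
  by (intro sum_pos) (auto simp: lessThan_empty_iff)

lemma S_le_M: "S k \<le> M"
proof -
  have "k mod n \<in> {..<n}" using npos by auto
  hence "S (k mod n) \<le> M" unfolding M_def by (intro Max_ge) auto
  thus ?thesis by (simp add: S_mod[of k])
qed

lemma M_attained: "\<exists>k<n. S k = M"
proof -
  have "M \<in> S ` {..<n}" unfolding M_def using npos by (intro Max_in) (auto simp: lessThan_empty_iff)
  thus ?thesis by auto
qed

lemma norm_e: "cmod (e m) = P 0 m"
  unfolding e_def P_def b_def by (simp add: prod_norm)

lemma e_Suc: "e (Suc m) = e m * a m" by (simp add: e_def)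

lemma e_nz: "e m \<noteq> 0" unfolding e_def using a_nz by simp

lemma norm_e_add: "cmod (e (m + L)) = cmod (e m) * P m L"
  by (simp add: norm_e P_add)

lemma S_rec_R:
  assumes "E \<noteq> 1"
  shows "E * S (Suc k) / (E - 1) = b k * (E * S k / (E - 1)) - 1"
proof -
  have "E - 1 \<noteq> 0" using assms by simp
  thus ?thesis unfolding S_rec using E_pos by (simp add: field_simps)
qed

lemma Gsum:
  assumes "E \<noteq> 1"
  shows "(\<Sum>l<L. inverse (P m (Suc l))) = E * S m / (E - 1) - E * S (m + L) / (E - 1) / P m L"
proof (induction L arbitrary: m)
  case 0
  then show ?case by simp
next
  case (Suc L)
  have bm: "b m > 0" by (rule b_pos)
  have "(\<Sum>l<Suc L. inverse (P m (Suc l))) = inverse (P m 1) + (\<Sum>l<L. inverse (P m (Suc (Suc l))))"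
    by (subst sum.lessThan_Suc_shift) simp
  also have "\<dots> = inverse (b m) + inverse (b m) * (\<Sum>l<L. inverse (P (Suc m) (Suc l)))"
    by (simp add: P_Suc_shift[of m] sum_distrib_left P_Suc_shift[of m "Suc 0"])
  also have "\<dots> = inverse (b m) + inverse (b m) * (E * S (Suc m) / (E - 1) - E * S (Suc m + L) / (E - 1) / P (Suc m) L)"
    by (simp add: Suc)
  also have "\<dots> = E * S m / (E - 1) - E * S (m + Suc L) / (E - 1) / P m (Suc L)"
  proof -
    have alg: "inverse B + inverse B * ((B * R - 1) - X / Q) = R - X / (B * Q)"
      if "B > 0" "Q > 0" for B R X Q :: real using that by (simp add: field_simps)
    show ?thesis unfolding S_rec_R[OF assms] P_Suc_shift[of m L]
      using alg[OF bm P_pos[of "Suc m" L], of "E * S m / (E - 1)" "E * S (Suc m + L) / (E - 1)"]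
      by simp
  qed
  finally show ?case .
qed

lemma stab_lt1:
  assumes E1: "E < 1" and eps: "\<epsilon> \<ge> 0"
    and f: "\<And>k. cmod (phi (Suc k) - a k * phi k) \<le> h * \<epsilon>"
  shows "cmod (phi m - phi 0 * e m) \<le> h * \<epsilon> * (E * S m / (1 - E))"
proof (induction m)
  case 0
  have "S 0 > 0" by (rule S_pos)
  then show ?case using E_pos E1 hpos eps by (simp add: e_def)
next
  case (Suc m)
  have eq: "phi (Suc m) - phi 0 * e (Suc m) = a m * (phi m - phi 0 * e m) + (phi (Suc m) - a m * phi m)"
    by (simp add: e_Suc algebra_simps)
  have "cmod (phi (Suc m) - phi 0 * e (Suc m)) \<le> b m * cmod (phi m - phi 0 * e m) + h * \<epsilon>"
    unfolding eq b_def by (rule order_trans[OF norm_triangle_ineq]) (simp add: norm_mult f)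
  also have "\<dots> \<le> b m * (h * \<epsilon> * (E * S m / (1 - E))) + h * \<epsilon>"
    using mult_left_mono[OF Suc.IH less_imp_le[OF b_pos[of m]]] by simp
  also have "\<dots> = h * \<epsilon> * (E * S (Suc m) / (1 - E))"
  proof -
    have "1 - E \<noteq> 0" using E1 by simp
    thus ?thesis unfolding S_rec using E_pos by (simp add: field_simps)
  qed
  finally show ?case .
qed

lemma stab_gt1:
  assumes E1: "E > 1" and eps: "\<epsilon> \<ge> 0"
    and f: "\<And>k. cmod (phi (Suc k) - a k * phi k) \<le> h * \<epsilon>"
  shows "\<exists>c. \<forall>m. cmod (phi m - c * e m) \<le> h * \<epsilon> * (E * S m / (E - 1))"
proof -
  have En1: "E \<noteq> 1" using E1 by simp
  define g where "g j = (phi (Suc j) - a j * phi j) / e (Suc j)" for j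
  define G where "G j = h * \<epsilon> * inverse (P 0 (Suc j))" for j
  have heps: "h * \<epsilon> \<ge> 0" using hpos eps by simp
  have gb: "cmod (g j) \<le> G j" for j
    unfolding g_def G_def norm_divide norm_e
    using f[of j] P_pos[of 0 "Suc j"] by (simp add: divide_right_mono field_simps)
  have sumG: "(\<Sum>l<L. inverse (P m (Suc l))) \<le> E * S m / (E - 1)" for m L
  proof -
    have "E * S (m + L) / (E - 1) / P m L \<ge> 0"
      using E1 S_pos[of "m+L"] P_pos[of m L] by simp
    thus ?thesis unfolding Gsum[OF En1] by simp
  qed
  have Gpart: "(\<Sum>l<L. G (l + m)) = h * \<epsilon> / cmod (e m) * (\<Sum>l<L. inverse (P m (Suc l)))" for m L
    unfolding G_def sum_distrib_left norm_e
  proof (rule sum.cong)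
    fix l
    have "P 0 (Suc (l + m)) = P 0 m * P m (Suc l)"
      using P_add[of 0 m "Suc l"] by (simp add: add.commute)
    thus "h * \<epsilon> * inverse (P 0 (Suc (l + m))) = h * \<epsilon> / P 0 m * inverse (P m (Suc l))"
      using P_pos[of 0 m] P_pos[of m "Suc l"] by (simp add: field_simps)
  qed simp
  have sG: "summable G"
  proof (rule summableI_nonneg_bounded)
    show "0 \<le> G j" for j unfolding G_def using heps P_pos[of 0 "Suc j"] by simp
    show "(\<Sum>l<L. G l) \<le> h * \<epsilon> * (E * S 0 / (E - 1))" for L
      using Gpart[of 0 L] mult_left_mono[OF sumG[of 0 L] heps] by (simp add: norm_e)
  qed
  have sg: "summable g" by (rule summable_comparison_test'[OF sG gb])
  have tele: "phi m / e m = phi 0 + (\<Sum>j<m. g j)" for m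
  proof (induction m)
    case 0 then show ?case by (simp add: e_def)
  next
    case (Suc m)
    have "phi (Suc m) / e (Suc m) = phi m / e m + g m"
      unfolding g_def e_Suc using e_nz[of m] a_nz[of m] by (simp add: field_simps)
    then show ?case using Suc by simp
  qed
  define c where "c = phi 0 + suminf g"
  show ?thesis
  proof (intro exI allI)
    fix m
    have "phi m - c * e m = e m * (phi m / e m - c)" using e_nz[of m] by (simp add: field_simps)
    also have "\<dots> = - e m * (\<Sum>l. g (l + m))"
      unfolding tele c_def suminf_split_initial_segment[OF sg, of m] by simp
    finally have eq: "phi m - c * e m = - e m * (\<Sum>l. g (l + m))" .
    have sGm: "summable (\<lambda>l. G (l + m))" by (rule summable_ignore_initial_segment[OF sG])
    have sngm: "summable (\<lambda>l. norm (g (l + m)))"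
      by (rule summable_comparison_test'[OF sGm]) (simp add: gb)
    have "cmod (\<Sum>l. g (l + m)) \<le> (\<Sum>l. norm (g (l + m)))" by (rule summable_norm[OF sngm])
    also have "\<dots> \<le> (\<Sum>l. G (l + m))" by (rule suminf_le[OF _ sngm sGm]) (simp add: gb)
    also have "\<dots> \<le> h * \<epsilon> / cmod (e m) * (E * S m / (E - 1))"
    proof (rule suminf_le_const[OF sGm])
      fix L
      have "h * \<epsilon> / cmod (e m) \<ge> 0" using heps by simp
      thus "(\<Sum>l<L. G (l + m)) \<le> h * \<epsilon> / cmod (e m) * (E * S m / (E - 1))"
        unfolding Gpart by (rule mult_left_mono[OF sumG])
    qed
    finally have "cmod (e m) * cmod (\<Sum>l. g (l + m)) \<le> cmod (e m) * (h * \<epsilon> / cmod (e m) * (E * S m / (E - 1)))"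
      by (rule mult_left_mono) simp
    hence "cmod (e m) * cmod (\<Sum>l. g (l + m)) \<le> h * \<epsilon> * (E * S m / (E - 1))"
      using e_nz[of m] by simp
    thus "cmod (phi m - c * e m) \<le> h * \<epsilon> * (E * S m / (E - 1))"
      unfolding eq by (simp add: norm_mult)
  qed
qed

lemma min_seq:
  assumes E1: "E > 1" and K: "0 < K" "K < h * E * M / (E - 1)"
    and bnd: "\<And>m. cmod (e m * complex_of_real (h * (\<Sum>j<m. inverse (P 0 (Suc j)))) - c * e m) \<le> K"
  shows False
proof -
  have En1: "E \<noteq> 1" using E1 by simp
  obtain k where k: "k < n" "S k = M" using M_attained by blast
  define U where "U m = h * (\<Sum>j<m. inverse (P 0 (Suc j)))" for m
  define Rm where "Rm = E * M / (E - 1)"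
  define D where "D = h * E * M / (E - 1) - K"
  have D: "D > 0" using K by (simp add: D_def)
  have Rm0: "Rm \<ge> 0" unfolding Rm_def using E1 S_pos[of k] k by simp
  obtain r where r: "(h * Rm + K) / D < E ^ r" using real_arch_pow[OF E1] by blast
  define L where "L = r * n"
  have Er: "E ^ r > 0" using E_pos by simp
  have PL: "P k L = E ^ r" unfolding L_def by (rule P_period)
  have Uk: "U (k + L') = U k + h / cmod (e k) * (\<Sum>l<L'. inverse (P k (Suc l)))" for L'
  proof (induction L')
    case 0 then show ?case by simp
  next
    case (Suc L')
    have "P 0 (Suc (k + L')) = P 0 k * P k (Suc L')" using P_add[of 0 k "Suc L'"] by simp
    hence "inverse (P 0 (Suc (k + L'))) = inverse (cmod (e k)) * inverse (P k (Suc L'))"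
      by (simp add: norm_e)
    then show ?case using Suc e_nz[of k] unfolding U_def by (simp add: field_simps)
  qed
  have Gs: "(\<Sum>l<L. inverse (P k (Suc l))) = E * M / (E - 1) - E * S (k + L) / (E - 1) / E ^ r"
    using Gsum[OF En1, of k L] k PL by simp
  have RkL: "E * S (k + L) / (E - 1) \<le> Rm"
    unfolding Rm_def using S_le_M[of "k + L"] E1 by (simp add: divide_right_mono)
  have ek: "cmod (e k) > 0" using e_nz by simp
  have ekL: "cmod (e (k + L)) = cmod (e k) * E ^ r" using norm_e_add PL by simp
  have b1: "cmod (e k) * cmod (complex_of_real (U k) - c) \<le> K"
    using bnd[of k] unfolding U_def by (simp add: norm_mult[symmetric] algebra_simps)
  have b2: "cmod (e (k + L)) * cmod (complex_of_real (U (k + L)) - c) \<le> K"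
    using bnd[of "k + L"] unfolding U_def by (simp add: norm_mult[symmetric] algebra_simps)
  have tri: "\<bar>U (k + L) - U k\<bar> \<le> cmod (complex_of_real (U k) - c) + cmod (complex_of_real (U (k + L)) - c)"
  proof -
    have "\<bar>U (k + L) - U k\<bar> = cmod ((complex_of_real (U (k + L)) - c) - (complex_of_real (U k) - c))"
      by (simp flip: of_real_diff)
    also have "\<dots> \<le> cmod (complex_of_real (U (k + L)) - c) + cmod (complex_of_real (U k) - c)"
      by (rule norm_triangle_ineq4)
    finally show ?thesis by simp
  qed
  have "cmod (e k) * \<bar>U (k + L) - U k\<bar> \<le> K + K / E ^ r"
  proof -
    have "cmod (e k) * \<bar>U (k + L) - U k\<bar> \<le> cmod (e k) * cmod (complex_of_real (U k) - c) + cmod (e k) * cmod (complex_of_real (U (k + L)) - c)"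
      using mult_left_mono[OF tri less_imp_le[OF ek]] by (simp add: distrib_left)
    also have "cmod (e k) * cmod (complex_of_real (U (k + L)) - c) \<le> K / E ^ r"
      using b2 Er unfolding ekL by (simp add: field_simps)
    finally show ?thesis using b1 by simp
  qed
  moreover have "cmod (e k) * \<bar>U (k + L) - U k\<bar> \<ge> h * E * M / (E - 1) - h * Rm / E ^ r"
  proof -
    have G0: "(\<Sum>l<L. inverse (P k (Suc l))) \<ge> 0" by (rule sum_nonneg) (simp add: less_imp_le[OF P_pos])
    have "cmod (e k) * \<bar>U (k + L) - U k\<bar> = h * (\<Sum>l<L. inverse (P k (Suc l)))"
      unfolding Uk using ek hpos G0 by (simp add: abs_mult)
    also have "\<dots> = h * E * M / (E - 1) - h * (E * S (k + L) / (E - 1)) / E ^ r"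
      unfolding Gs by (simp add: algebra_simps)
    finally have eq: "cmod (e k) * \<bar>U (k + L) - U k\<bar> = h * E * M / (E - 1) - h * (E * S (k + L) / (E - 1)) / E ^ r" .
    have "h * (E * S (k + L) / (E - 1)) / E ^ r \<le> h * Rm / E ^ r"
      using divide_right_mono[OF mult_left_mono[OF RkL less_imp_le[OF hpos]] less_imp_le[OF Er]] by simp
    thus ?thesis using eq by linarith
  qed
  ultimately have "h * E * M / (E - 1) - h * Rm / E ^ r \<le> K + K / E ^ r" by linarith
  hence "D \<le> (h * Rm + K) / E ^ r" unfolding D_def by (simp add: add_divide_distrib algebra_simps)
  hence "D * E ^ r \<le> h * Rm + K" using Er by (simp add: field_simps)
  moreover have "h * Rm + K < D * E ^ r" using r D by (simp add: field_simps)
  ultimately show False by simp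
qed

lemma cond_equiv:
  "(\<forall>t\<in>Tset h. cmod (Delta_h h phi t - pfun h n pk t * phi t) \<le> \<epsilon>) \<longleftrightarrow>
   (\<forall>k. cmod (phi (real (Suc k) * h) - a k * phi (real k * h)) \<le> h * \<epsilon>)"
proof -
  have eq: "Delta_h h phi (real k * h) - pfun h n pk (real k * h) * phi (real k * h)
      = (phi (real (Suc k) * h) - a k * phi (real k * h)) / complex_of_real h" for k
  proof -
    have "real k * h + h = real (Suc k) * h" by (simp add: algebra_simps)
    moreover have "pfun h n pk (real k * h) = pk (k mod n)" using hpos by (simp add: pfun_def)
    ultimately show ?thesis unfolding Delta_h_def a_def using hpos by (simp add: field_simps)
  qed
  have nr: "cmod (z / complex_of_real h) \<le> \<epsilon> \<longleftrightarrow> cmod z \<le> h * \<epsilon>" for z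
    using hpos by (simp add: norm_divide field_simps)
  show ?thesis unfolding Tset_def using eq nr by auto
qed

lemma sol_ok: "\<forall>t\<in>Tset h. Delta_h h (\<lambda>t. c * e (nat \<lfloor>t / h\<rfloor>)) t - pfun h n pk t * (c * e (nat \<lfloor>t / h\<rfloor>)) = 0"
proof
  fix t assume "t \<in> Tset h"
  then obtain k where t: "t = real k * h" by (auto simp: Tset_def)
  have "real k * h + h = real (Suc k) * h" by (simp add: algebra_simps)
  moreover have "(real k * h + h) / h = real (Suc k)" using hpos by (simp add: field_simps)
  ultimately show "Delta_h h (\<lambda>t. c * e (nat \<lfloor>t / h\<rfloor>)) t - pfun h n pk t * (c * e (nat \<lfloor>t / h\<rfloor>)) = 0"
    unfolding t Delta_h_def pfun_def using hpos
    by (simp add: e_Suc a_def field_simps del: of_nat_Suc)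
qed

lemma sol_form:
  assumes "\<forall>t\<in>Tset h. Delta_h h x t - pfun h n pk t * x t = 0"
  shows "x (real m * h) = x 0 * e m"
proof (induction m)
  case 0 then show ?case by (simp add: e_def)
next
  case (Suc m)
  have "real m * h \<in> Tset h" by (auto simp: Tset_def)
  with assms have "Delta_h h x (real m * h) - pfun h n pk (real m * h) * x (real m * h) = 0" by blast
  moreover have "real m * h + h = real (Suc m) * h" by (simp add: algebra_simps)
  moreover have "pfun h n pk (real m * h) = pk (m mod n)" using hpos by (simp add: pfun_def)
  ultimately have "x (real (Suc m) * h) = a m * x (real m * h)"
    unfolding Delta_h_def a_def using hpos by (simp add: field_simps del: of_nat_Suc)
  then show ?case using Suc by (simp add: e_Suc)
qed

lemma M_pos: "M > 0" using M_attained S_pos by metis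

lemma main_const:
  assumes "E \<noteq> 1"
  shows "ulam_constant h (pfun h n pk) (h * E / \<bar>1 - E\<bar> * M)"
  unfolding ulam_constant_def
proof (intro conjI allI impI)
  show "0 < h * E / \<bar>1 - E\<bar> * M" using hpos E_pos M_pos assms by simp
  fix \<epsilon> :: real and phi :: "real \<Rightarrow> complex"
  assume eps: "\<epsilon> > 0"
  assume "\<forall>t\<in>Tset h. cmod (Delta_h h phi t - pfun h n pk t * phi t) \<le> \<epsilon>"
  hence f: "\<And>k. cmod ((\<lambda>k. phi (real k * h)) (Suc k) - a k * (\<lambda>k. phi (real k * h)) k) \<le> h * \<epsilon>"
    unfolding cond_equiv by simp
  have key: "\<exists>c. \<forall>m. cmod (phi (real m * h) - c * e m) \<le> h * \<epsilon> * (E * S m / \<bar>1 - E\<bar>)"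
  proof (cases "E < 1")
    case True
    show ?thesis using stab_lt1[OF True less_imp_le[OF eps] f] True by (intro exI[of _ "phi 0"]) simp
  next
    case False
    hence E1: "E > 1" using assms by simp
    obtain c where "\<forall>m. cmod (phi (real m * h) - c * e m) \<le> h * \<epsilon> * (E * S m / (E - 1))"
      using stab_gt1[OF E1 less_imp_le[OF eps] f] by blast
    thus ?thesis using E1 by (intro exI[of _ c]) simp
  qed
  then obtain c where c: "\<And>m. cmod (phi (real m * h) - c * e m) \<le> h * \<epsilon> * (E * S m / \<bar>1 - E\<bar>)" by blast
  show "\<exists>x. (\<forall>t\<in>Tset h. Delta_h h x t - pfun h n pk t * x t = 0) \<and>
             (\<forall>t\<in>Tset h. cmod (phi t - x t) \<le> h * E / \<bar>1 - E\<bar> * M * \<epsilon>)"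
  proof (intro exI conjI)
    show "\<forall>t\<in>Tset h. Delta_h h (\<lambda>t. c * e (nat \<lfloor>t / h\<rfloor>)) t - pfun h n pk t * (c * e (nat \<lfloor>t / h\<rfloor>)) = 0"
      by (rule sol_ok)
    show "\<forall>t\<in>Tset h. cmod (phi t - c * e (nat \<lfloor>t / h\<rfloor>)) \<le> h * E / \<bar>1 - E\<bar> * M * \<epsilon>"
    proof
      fix t assume "t \<in> Tset h"
      then obtain m where t: "t = real m * h" by (auto simp: Tset_def)
      have "h * \<epsilon> * (E * S m / \<bar>1 - E\<bar>) \<le> h * \<epsilon> * (E * M / \<bar>1 - E\<bar>)"
        using hpos eps E_pos assms S_le_M[of m]
        by (intro mult_left_mono divide_right_mono) auto
      note le1 = order_trans[OF c[of m] this]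
      have eq: "h * \<epsilon> * (E * M / \<bar>1 - E\<bar>) = h * E / \<bar>1 - E\<bar> * M * \<epsilon>" by simp
      have fl: "nat \<lfloor>real m * h / h\<rfloor> = m" using hpos by simp
      show "cmod (phi t - c * e (nat \<lfloor>t / h\<rfloor>)) \<le> h * E / \<bar>1 - E\<bar> * M * \<epsilon>"
        using le1 unfolding t fl eq .
    qed
  qed
qed

lemma main_min:
  assumes E1: "E > 1"
  shows "ulam_min_constant h (pfun h n pk) (h * E / \<bar>1 - E\<bar> * M)"
  unfolding ulam_min_constant_def
proof (intro conjI allI impI)
  show "ulam_constant h (pfun h n pk) (h * E / \<bar>1 - E\<bar> * M)" using E1 by (intro main_const) simp
  fix K assume K: "0 < K \<and> K < h * E / \<bar>1 - E\<bar> * M"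
  show "\<not> ulam_constant h (pfun h n pk) K"
  proof
    assume uc: "ulam_constant h (pfun h n pk) K"
    define ps where "ps m = e m * complex_of_real (h * (\<Sum>j<m. inverse (P 0 (Suc j))))" for m
    define phi where "phi t = ps (nat \<lfloor>t / h\<rfloor>)" for t
    have phik: "phi (real k * h) = ps k" for k unfolding phi_def using hpos by simp
    have "\<forall>k. cmod (phi (real (Suc k) * h) - a k * phi (real k * h)) \<le> h * 1"
    proof
      fix k
      have deq: "phi (real (Suc k) * h) - a k * phi (real k * h) = e (Suc k) * complex_of_real (h * inverse (P 0 (Suc k)))"
        unfolding phik ps_def e_Suc by (simp add: algebra_simps)
      show "cmod (phi (real (Suc k) * h) - a k * phi (real k * h)) \<le> h * 1"
      proof -
        have p: "P 0 (Suc k) > 0" by (rule P_pos)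
        have q: "h * inverse (P 0 (Suc k)) > 0" using p hpos by simp
        have "cmod (e (Suc k) * complex_of_real (h * inverse (P 0 (Suc k)))) = P 0 (Suc k) * (h * inverse (P 0 (Suc k)))"
          by (simp only: norm_mult norm_e norm_of_real abs_of_pos[OF q])
        also have "\<dots> = h" using p by simp
        finally have nh: "cmod (e (Suc k) * complex_of_real (h * inverse (P 0 (Suc k)))) = h" .
        show ?thesis using deq nh by (metis mult_1_right order_refl)
      qed
    qed
    hence "\<forall>t\<in>Tset h. cmod (Delta_h h phi t - pfun h n pk t * phi t) \<le> 1" unfolding cond_equiv .
    note cnd = this
    from uc have allf: "\<forall>\<epsilon>>0. \<forall>\<phi> :: real \<Rightarrow> complex.
        (\<forall>t\<in>Tset h. cmod (Delta_h h \<phi> t - pfun h n pk t * \<phi> t) \<le> \<epsilon>) \<longrightarrow>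
        (\<exists>x :: real \<Rightarrow> complex. (\<forall>t\<in>Tset h. Delta_h h x t - pfun h n pk t * x t = 0) \<and>
             (\<forall>t\<in>Tset h. cmod (\<phi> t - x t) \<le> K * \<epsilon>))" unfolding ulam_constant_def by (rule conjunct2)
    have "(\<forall>t\<in>Tset h. cmod (Delta_h h phi t - pfun h n pk t * phi t) \<le> 1) \<longrightarrow>
        (\<exists>x :: real \<Rightarrow> complex. (\<forall>t\<in>Tset h. Delta_h h x t - pfun h n pk t * x t = 0) \<and>
             (\<forall>t\<in>Tset h. cmod (phi t - x t) \<le> K * 1))"
      using spec[OF mp[OF spec[OF allf, of 1] zero_less_one], of phi] by (simp only: mult_1_right)
    with cnd obtain x where xs: "\<forall>t\<in>Tset h. Delta_h h x t - pfun h n pk t * x t = 0"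
      and xb: "\<forall>t\<in>Tset h. cmod (phi t - x t) \<le> K * 1" by blast
    have "cmod (e m * complex_of_real (h * (\<Sum>j<m. inverse (P 0 (Suc j)))) - x 0 * e m) \<le> K" for m
    proof -
      have "real m * h \<in> Tset h" by (auto simp: Tset_def)
      with xb have "cmod (phi (real m * h) - x (real m * h)) \<le> K * 1" by blast
      thus ?thesis unfolding phik sol_form[OF xs, of m] ps_def by simp
    qed
    moreover have "K < h * E * M / (E - 1)" using K E1 by simp
    ultimately show False using min_seq[OF E1] K by blast
  qed
qed

end

theorem theorem4p4:
  fixes h :: real and n :: nat and pk :: "nat \<Rightarrow> complex"
  assumes hpos: "h > 0"
    and npos: "n \<ge> 1"
    and pk_ne: "\<forall>i<n. pk i \<noteq> - (1 / complex_of_real h)"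
    and minper: "\<forall>m. 0 < m \<and> m < n \<longrightarrow>
                   \<not> (\<forall>t\<in>Tset h. pfun h n pk (t + real m * h) = pfun h n pk t)"
    and Epos: "0 < (\<Prod>i<n. cmod (1 + complex_of_real h * pk i))"
    and Ene1: "(\<Prod>i<n. cmod (1 + complex_of_real h * pk i)) \<noteq> 1"
  shows "ulam_stable h (pfun h n pk)
       \<and> ulam_constant h (pfun h n pk)
           (h * (\<Prod>i<n. cmod (1 + complex_of_real h * pk i))
              / \<bar>1 - (\<Prod>i<n. cmod (1 + complex_of_real h * pk i))\<bar>
            * Max ((\<lambda>k. \<Sum>j=1..n. inverse (\<Prod>i<j. cmod (1 + complex_of_real h * pk ((k + i) mod n)))) ` {..<n}))
       \<and> ((\<Prod>i<n. cmod (1 + complex_of_real h * pk i)) > 1 \<longrightarrow>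
           ulam_min_constant h (pfun h n pk)
           (h * (\<Prod>i<n. cmod (1 + complex_of_real h * pk i))
              / \<bar>1 - (\<Prod>i<n. cmod (1 + complex_of_real h * pk i))\<bar>
            * Max ((\<lambda>k. \<Sum>j=1..n. inverse (\<Prod>i<j. cmod (1 + complex_of_real h * pk ((k + i) mod n)))) ` {..<n})))"
proof -
  interpret ul h n pk using hpos npos pk_ne by unfold_locales
  have Eeq: "(\<Prod>i<n. cmod (1 + complex_of_real h * pk i)) = E" by (simp add: E_def)
  have Meq: "Max ((\<lambda>k. \<Sum>j=1..n. inverse (\<Prod>i<j. cmod (1 + complex_of_real h * pk ((k + i) mod n)))) ` {..<n}) = M"
    by (simp add: M_def S_def[abs_def])
  have En1: "E \<noteq> 1" using Ene1 Eeq by simp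
  have C: "ulam_constant h (pfun h n pk) (h * E / \<bar>1 - E\<bar> * M)" by (rule main_const[OF En1])
  show ?thesis unfolding Eeq Meq ulam_stable_def using C main_min by blast
qed

end
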